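(* Let $p,q$ be positive integers with $p<q$. Then $$\sum_{n=1}^{\infty}\log\left(1+\frac{1}{n}\right)\cos\left(\frac{(2n+1)\pi p}{q}\right)=\log q\,\cos\left(\frac{\pi p}{q}\right)-2\sin\left(\frac{\pi p}{q}\right)\sum_{j=1}^{q-1}\log\Gamma\left(\frac{j}{q}\right)\sin\left(\frac{2\pi jp}{q}\right).$$
   Context: $\Gamma$ denotes the Euler gamma function. *)

theory Defs
  imports "HOL-Analysis.Analysis"
begin

end

theory Submission imports Defs "HOL-Real_Asymp.Real_Asymp" begin

lemma ln_poch_eq:
  fixes z :: real assumes z: "z > 0" and n: "n > 0"
  shows "ln (pochhammer z n) = ln (fact (n-1)) + z * ln (real n) - ln (Gamma_series' z n)"
proof -
  have pp: "pochhammer z n > 0" using z by (simp add: pochhammer_pos)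
  have ff: "(fact (n-1)::real) > 0" by simp
  have "Gamma_series' z n = fact (n-1) * exp (z * ln (real n)) / pochhammer z n"
    by (simp add: Gamma_series'_def)
  hence "ln (Gamma_series' z n) = ln (fact (n-1)) + z * ln (real n) - ln (pochhammer z n)"
    using pp ff by (simp add: ln_div ln_mult)
  thus ?thesis by simp
qed

lemma ln_GS_lim:
  fixes z :: real assumes z: "z > 0"
  shows "(\<lambda>n. ln (Gamma_series' z n)) \<longlonglongrightarrow> ln (Gamma z)"
  using z by (intro tendsto_ln Gamma_series'_LIMSEQ) (simp add: less_imp_neq[symmetric])

lemma poch_Suc_ln:
  fixes z :: real assumes z: "z > 0"
  shows "ln (pochhammer z (Suc M)) = ln (pochhammer z M) + ln (z + real M)"
proof -
  have "pochhammer z M > 0" using z by (simp add: pochhammer_pos)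
  moreover have "z + real M > 0" using z by simp
  ultimately show ?thesis by (simp add: pochhammer_rec' ln_mult)
qed

lemma csum_zero:
  fixes x :: real and q :: nat
  assumes s: "sin x \<noteq> 0" and per: "sin (2 * real (q+1) * x) = sin (2 * x)"
  shows "(\<Sum>j=1..q. cos ((2 * real j + 1) * x)) = 0"
proof -
  have key: "cos ((2 * real j + 1) * x) = (sin (2 * real (Suc j) * x) - sin (2 * real j * x)) / (2 * sin x)" for j
  proof -
    have "sin (2 * real (Suc j) * x) = sin ((2 * real j + 1) * x + x)" by (simp add: algebra_simps)
    moreover have "sin (2 * real j * x) = sin ((2 * real j + 1) * x - x)" by (simp add: algebra_simps)
    ultimately have "sin (2 * real (Suc j) * x) - sin (2 * real j * x) = 2 * cos ((2 * real j + 1) * x) * sin x"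
      by (simp add: sin_add sin_diff)
    thus ?thesis using s by simp
  qed
  have "(\<Sum>j=1..q. cos ((2 * real j + 1) * x)) = (\<Sum>j=1..q. (sin (2 * real (Suc j) * x) - sin (2 * real j * x))) / (2 * sin x)"
    by (simp add: key sum_divide_distrib)
  also have "(\<Sum>j=1..q. (sin (2 * real (Suc j) * x) - sin (2 * real j * x))) = sin (2 * real (Suc q) * x) - sin (2 * real 1 * x)"
    by (rule sum_Suc_diff) simp
  also have "\<dots> = 0" using per by simp
  finally show ?thesis by simp
qed

lemma sum_split_add: fixes a b :: nat and g :: "nat \<Rightarrow> 'a::comm_monoid_add" shows "(\<Sum>k<a+b. g k) = (\<Sum>k<a. g k) + (\<Sum>i<b. g (a+i))"
  by (induct b) (simp_all add: add_ac)

lemma cos_shift: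
  fixes x :: real
  assumes qx: "real q * x = pi * real p"
  shows "cos ((2 * real (M*q + j) + 1) * x) = cos ((2 * real j + 1) * x)"
proof -
  have "(2 * real (M*q + j) + 1) * x = (2 * real j + 1) * x + 2 * pi * real (M*p)"
    using qx by (simp add: algebra_simps)
  hence "cos ((2 * real (M*q + j) + 1) * x) = cos ((2 * real j + 1) * x + 2 * pi * real (M*p))" by simp
  also have "\<dots> = cos ((2 * real j + 1) * x)"
  proof -
    have "cos (2 * pi * real (M*p)) = 1" using cos_int_2pin[of "int (M*p)"] by simp
    moreover have "sin (2 * pi * real (M*p)) = 0" using sin_int_2pin[of "int (M*p)"] by simp
    ultimately show ?thesis by (simp add: cos_add)
  qed
  finally show ?thesis .
qed

lemma partial_blocks:
  fixes x :: real and p q :: nat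
  assumes q: "q > 0" and qx: "real q * x = pi * real p"
  shows "(\<Sum>k<M*q. ln (1 + 1 / real (k + 1)) * cos ((2 * real (k + 1) + 1) * x))
    = (\<Sum>j=1..q. cos ((2 * real j + 1) * x) *
          (ln (pochhammer ((real j + 1) / real q) M) - ln (pochhammer (real j / real q) M)))"
proof (induct M)
  case 0 then show ?case by simp
next
  case (Suc M)
  have blk: "(\<Sum>i<q. ln (1 + 1 / real (M*q + i + 1)) * cos ((2 * real (M*q + i + 1) + 1) * x))
     = (\<Sum>j=1..q. cos ((2 * real j + 1) * x) *
          (ln ((real j + 1) / real q + real M) - ln (real j / real q + real M)))"
  proof -
    have "(\<Sum>j=1..q. cos ((2 * real j + 1) * x) *
          (ln ((real j + 1) / real q + real M) - ln (real j / real q + real M)))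
       = (\<Sum>i<q. cos ((2 * real (Suc i) + 1) * x) *
          (ln ((real (Suc i) + 1) / real q + real M) - ln (real (Suc i) / real q + real M)))"
      by (subst One_nat_def, subst sum.atLeast1_atMost_eq) simp
    also have "\<dots> = (\<Sum>i<q. ln (1 + 1 / real (M*q + i + 1)) * cos ((2 * real (M*q + i + 1) + 1) * x))"
    proof (rule sum.cong[OF refl])
      fix i assume "i \<in> {..<q}"
      have c: "cos ((2 * real (M*q + i + 1) + 1) * x) = cos ((2 * real (Suc i) + 1) * x)"
        using cos_shift[OF qx, of M "Suc i"] by simp
      have a: "(real (Suc i) + 1) / real q + real M > 0" "real (Suc i) / real q + real M > 0"
        using q by (simp_all add: add_pos_nonneg)
      have "ln ((real (Suc i) + 1) / real q + real M) - ln (real (Suc i) / real q + real M)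
          = ln (((real (Suc i) + 1) / real q + real M) / (real (Suc i) / real q + real M))"
        using a by (simp add: ln_div)
      also have "((real (Suc i) + 1) / real q + real M) / (real (Suc i) / real q + real M)
          = 1 + 1 / real (M*q + i + 1)"
      proof -
        have qq: "real q > 0" using q by simp
        have d: "real (M*q + i + 1) > 0" by (rule of_nat_0_less_iff[THEN iffD2]) simp
        have "((real (Suc i) + 1) / real q + real M) = (real (M*q + i + 1) + 1) / real q"
          using qq by (simp add: field_simps)
        moreover have "real (Suc i) / real q + real M = real (M*q + i + 1) / real q"
          using qq by (simp add: field_simps)
        moreover have "((real (M*q + i + 1) + 1) / real q) / (real (M*q + i + 1) / real q)
            = (real (M*q + i + 1) + 1) / real (M*q + i + 1)" using qq by simp
        moreover have "(real (M*q + i + 1) + 1) / real (M*q + i + 1) = 1 + 1 / real (M*q + i + 1)"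
          using d by (simp add: field_simps)
        ultimately show ?thesis using q by simp
      qed
      finally show "cos ((2 * real (Suc i) + 1) * x) *
          (ln ((real (Suc i) + 1) / real q + real M) - ln (real (Suc i) / real q + real M))
          = ln (1 + 1 / real (M*q + i + 1)) * cos ((2 * real (M*q + i + 1) + 1) * x)"
        using c by simp
    qed
    finally show ?thesis ..
  qed
  have "(\<Sum>k<Suc M*q. ln (1 + 1 / real (k + 1)) * cos ((2 * real (k + 1) + 1) * x))
     = (\<Sum>k<M*q. ln (1 + 1 / real (k + 1)) * cos ((2 * real (k + 1) + 1) * x))
       + (\<Sum>i<q. ln (1 + 1 / real (M*q + i + 1)) * cos ((2 * real (M*q + i + 1) + 1) * x))"
    using sum_split_add[of "\<lambda>k. ln (1 + 1 / real (k + 1)) * cos ((2 * real (k + 1) + 1) * x)" "M*q" q]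
    by (simp add: add.assoc add.commute)
  also note Suc
  also note blk
  also have "(\<Sum>j=1..q. cos ((2 * real j + 1) * x) *
          (ln (pochhammer ((real j + 1) / real q) M) - ln (pochhammer (real j / real q) M)))
     + (\<Sum>j=1..q. cos ((2 * real j + 1) * x) *
          (ln ((real j + 1) / real q + real M) - ln (real j / real q + real M)))
     = (\<Sum>j=1..q. cos ((2 * real j + 1) * x) *
          (ln (pochhammer ((real j + 1) / real q) (Suc M)) - ln (pochhammer (real j / real q) (Suc M))))"
    unfolding sum.distrib[symmetric]
  proof (rule sum.cong[OF refl])
    fix j assume j: "j \<in> {1..q}"
    have "(real j + 1) / real q > 0" "real j / real q > 0" using j q by auto
    thus "cos ((2 * real j + 1) * x) *
          (ln (pochhammer ((real j + 1) / real q) M) - ln (pochhammer (real j / real q) M)) +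
          cos ((2 * real j + 1) * x) *
          (ln ((real j + 1) / real q + real M) - ln (real j / real q + real M)) =
          cos ((2 * real j + 1) * x) *
          (ln (pochhammer ((real j + 1) / real q) (Suc M)) - ln (pochhammer (real j / real q) (Suc M)))"
      by (simp add: poch_Suc_ln algebra_simps)
  qed
  finally show ?case .
qed

lemma div_filterlim: "q > 0 \<Longrightarrow> filterlim (\<lambda>N::nat. N div q) sequentially sequentially"
  unfolding filterlim_at_top eventually_at_top_linorder
proof (intro allI exI allI impI)
  fix Z N :: nat assume q: "q > 0" and N: "Z * q \<le> N"
  have "Z = (Z*q) div q" using q by simp
  also have "\<dots> \<le> N div q" using N by (rule div_le_mono)
  finally show "Z \<le> N div q" .
qed

lemma inv_mono_aux: "1 / real (a + i + 1) \<le> 1 / (real a + 1)"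
  by (rule frac_le) simp_all

lemma block_to_full:
  fixes f :: "nat \<Rightarrow> real"
  assumes q: "q > 0" and blk: "(\<lambda>M. \<Sum>k<M*q. f k) \<longlonglongrightarrow> L"
    and bnd: "\<And>k. \<bar>f k\<bar> \<le> 1 / real (k + 1)"
  shows "f sums L"
  unfolding sums_def
proof -
  have eq: "(\<Sum>k<N. f k) = (\<Sum>k<N div q * q. f k) + (\<Sum>i<N mod q. f (N div q * q + i))" for N
    using sum_split_add[of f "N div q * q" "N mod q"] by simp
  have t1: "(\<lambda>N. \<Sum>k<N div q * q. f k) \<longlonglongrightarrow> L"
    using filterlim_compose[OF blk div_filterlim[OF q]] by simp
  have g0: "(\<lambda>M. real q / (real (M*q) + 1)) \<longlonglongrightarrow> 0"
    using q by real_asymp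
  have g0': "(\<lambda>N. real q / (real (N div q * q) + 1)) \<longlonglongrightarrow> 0"
    using filterlim_compose[OF g0 div_filterlim[OF q]] by simp
  have t2: "(\<lambda>N. \<Sum>i<N mod q. f (N div q * q + i)) \<longlonglongrightarrow> 0"
  proof (rule Lim_null_comparison[OF _ g0'])
    show "\<forall>\<^sub>F N in sequentially. norm (\<Sum>i<N mod q. f (N div q * q + i)) \<le> real q / (real (N div q * q) + 1)"
    proof (intro always_eventually allI)
      fix N
      have "norm (\<Sum>i<N mod q. f (N div q * q + i)) \<le> (\<Sum>i<N mod q. \<bar>f (N div q * q + i)\<bar>)"
        by (simp add: sum_abs)
      also have "\<dots> \<le> (\<Sum>i<N mod q. 1 / (real (N div q * q) + 1))"
      proof (rule sum_mono)
        fix i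
        have "\<bar>f (N div q * q + i)\<bar> \<le> 1 / real (N div q * q + i + 1)" by (rule bnd)
        also have "\<dots> \<le> 1 / (real (N div q * q) + 1)"
          by (rule inv_mono_aux[of "N div q * q" i])
        finally show "\<bar>f (N div q * q + i)\<bar> \<le> 1 / (real (N div q * q) + 1)" .
      qed
      also have "\<dots> = real (N mod q) / (real (N div q * q) + 1)" by simp
      also have "\<dots> \<le> real q / (real (N div q * q) + 1)"
        using q by (intro divide_right_mono) (auto simp: less_imp_le)
      finally show "norm (\<Sum>i<N mod q. f (N div q * q + i)) \<le> real q / (real (N div q * q) + 1)" .
    qed
  qed
  show "(\<lambda>N. \<Sum>k<N. f k) \<longlonglongrightarrow> L"
  proof -
    have "(\<lambda>N. \<Sum>k<N. f k) = (\<lambda>N. (\<Sum>k<N div q * q. f k) + (\<Sum>i<N mod q. f (N div q * q + i)))"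
      by (rule ext) (rule eq)
    thus ?thesis using tendsto_add[OF t1 t2] by simp
  qed
qed

lemma block_limit:
  fixes x :: real and p q :: nat
  assumes q: "q > 0" and qx: "real q * x = pi * real p" and s: "sin x \<noteq> 0"
  shows "(\<lambda>M. \<Sum>k<M*q. ln (1 + 1 / real (k + 1)) * cos ((2 * real (k + 1) + 1) * x))
    \<longlonglongrightarrow> (\<Sum>j=1..q. cos ((2 * real j + 1) * x) *
          (ln (Gamma (real j / real q)) - ln (Gamma ((real j + 1) / real q))))"
proof -
  have per: "sin (2 * real (q+1) * x) = sin (2 * x)"
  proof -
    have "2 * real (q+1) * x = 2 * x + 2 * pi * real p" using qx by (simp add: algebra_simps)
    moreover have "cos (2 * pi * real p) = 1" using cos_int_2pin[of "int p"] by simp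
    moreover have "sin (2 * pi * real p) = 0" using sin_int_2pin[of "int p"] by simp
    ultimately show ?thesis by (simp add: sin_add)
  qed
  have cz: "(\<Sum>j=1..q. cos ((2 * real j + 1) * x)) = 0" by (rule csum_zero[OF s per])
  have ev: "\<forall>\<^sub>F M in sequentially.
     (\<Sum>j=1..q. cos ((2 * real j + 1) * x) *
          (ln (Gamma_series' (real j / real q) M) - ln (Gamma_series' ((real j + 1) / real q) M)))
     = (\<Sum>k<M*q. ln (1 + 1 / real (k + 1)) * cos ((2 * real (k + 1) + 1) * x))"
    using eventually_gt_at_top[of "0::nat"]
  proof eventually_elim
    case (elim M)
    have "(\<Sum>k<M*q. ln (1 + 1 / real (k + 1)) * cos ((2 * real (k + 1) + 1) * x))
      = (\<Sum>j=1..q. cos ((2 * real j + 1) * x) *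
          (ln (pochhammer ((real j + 1) / real q) M) - ln (pochhammer (real j / real q) M)))"
      by (rule partial_blocks[OF q qx])
    also have "\<dots> = (\<Sum>j=1..q. cos ((2 * real j + 1) * x) * (ln (real M) / real q) +
          cos ((2 * real j + 1) * x) *
          (ln (Gamma_series' (real j / real q) M) - ln (Gamma_series' ((real j + 1) / real q) M)))"
    proof (rule sum.cong[OF refl])
      fix j assume j: "j \<in> {1..q}"
      have a: "(real j + 1) / real q > 0" "real j / real q > 0" using j q by auto
      show "cos ((2 * real j + 1) * x) *
          (ln (pochhammer ((real j + 1) / real q) M) - ln (pochhammer (real j / real q) M)) =
          cos ((2 * real j + 1) * x) * (ln (real M) / real q) +
          cos ((2 * real j + 1) * x) *
          (ln (Gamma_series' (real j / real q) M) - ln (Gamma_series' ((real j + 1) / real q) M))"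
      proof -
        note e1 = ln_poch_eq[OF a(1) elim] and e2 = ln_poch_eq[OF a(2) elim]
        have h: "(real j + 1) / real q * ln (real M) = ln (real M) / real q + real j / real q * ln (real M)"
          by (simp add: field_simps add_divide_distrib)
        have "ln (pochhammer ((real j + 1) / real q) M) - ln (pochhammer (real j / real q) M)
           = ln (real M) / real q + (ln (Gamma_series' (real j / real q) M) - ln (Gamma_series' ((real j + 1) / real q) M))"
          using e1 e2 h by linarith
        thus ?thesis by (metis distrib_left)
      qed
    qed
    also have "\<dots> = (\<Sum>j=1..q. cos ((2 * real j + 1) * x)) * (ln (real M) / real q) +
       (\<Sum>j=1..q. cos ((2 * real j + 1) * x) *
          (ln (Gamma_series' (real j / real q) M) - ln (Gamma_series' ((real j + 1) / real q) M)))"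
      by (simp add: sum.distrib sum_distrib_right sum_divide_distrib)
    finally show ?case using cz by simp
  qed
  have lim: "(\<lambda>M. \<Sum>j=1..q. cos ((2 * real j + 1) * x) *
          (ln (Gamma_series' (real j / real q) M) - ln (Gamma_series' ((real j + 1) / real q) M)))
     \<longlonglongrightarrow> (\<Sum>j=1..q. cos ((2 * real j + 1) * x) *
          (ln (Gamma (real j / real q)) - ln (Gamma ((real j + 1) / real q))))"
  proof (intro tendsto_sum tendsto_mult tendsto_const tendsto_diff)
    fix j assume j: "j \<in> {1..q}"
    have a: "(real j + 1) / real q > 0" "real j / real q > 0" using j q by auto
    show "(\<lambda>M. ln (Gamma_series' (real j / real q) M)) \<longlonglongrightarrow> ln (Gamma (real j / real q))"
      by (rule ln_GS_lim[OF a(2)])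
    show "(\<lambda>M. ln (Gamma_series' ((real j + 1) / real q) M)) \<longlonglongrightarrow> ln (Gamma ((real j + 1) / real q))"
      by (rule ln_GS_lim[OF a(1)])
  qed
  show ?thesis using Lim_transform_eventually[OF lim ev] .
qed

lemma telescope_aux:
  fixes c G :: "nat \<Rightarrow> real"
  shows "(\<Sum>j=1..Suc m. c j * (G j - G (Suc j))) =
    (\<Sum>j=1..m. (c j - c (j - 1)) * G j) + c 0 * G 1 + (c (Suc m) - c m) * G (Suc m)
      - c (Suc m) * G (Suc (Suc m))"
  by (induct m) (simp_all add: algebra_simps)

theorem mainTheorem4:
  fixes p q :: nat
  assumes "0 < p" and "p < q"
  shows "(\<lambda>n. ln (1 + 1 / real (n + 1)) * cos ((2 * real (n + 1) + 1) * pi * real p / real q))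
    sums (ln (real q) * cos (pi * real p / real q)
          - 2 * sin (pi * real p / real q) *
            (\<Sum>j = 1..q - 1. ln (Gamma (real j / real q)) * sin (2 * pi * real j * real p / real q)))"
proof -
  define x where "x = pi * real p / real q"
  have q: "q > 0" using assms by simp
  have qr: "real q > 0" using q by simp
  have qx: "real q * x = pi * real p" using qr by (simp add: x_def)
  have sx: "sin x > 0"
  proof (rule sin_gt_zero)
    show "0 < x" using assms qr by (simp add: x_def)
    have "real p / real q < 1" using assms qr by simp
    hence "pi * (real p / real q) < pi * 1" by (intro mult_strict_left_mono) auto
    thus "x < pi" by (simp add: x_def)
  qed
  define c where "c j = cos ((2 * real j + 1) * x)" for j :: nat
  define G where "G j = ln (Gamma (real j / real q))" for j :: nat
  let ?f = "\<lambda>k. ln (1 + 1 / real (k + 1)) * cos ((2 * real (k + 1) + 1) * x)"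
  have bnd: "\<bar>?f k\<bar> \<le> 1 / real (k + 1)" for k
  proof -
    have l0: "ln (1 + 1 / real (k + 1)) \<ge> 0" by simp
    have "\<bar>?f k\<bar> = ln (1 + 1 / real (k + 1)) * \<bar>cos ((2 * real (k + 1) + 1) * x)\<bar>"
      using l0 by (simp add: abs_mult)
    also have "\<dots> \<le> ln (1 + 1 / real (k + 1)) * 1"
      using l0 abs_cos_le_one by (intro mult_left_mono) auto
    also have "\<dots> \<le> 1 / real (k + 1)" by (simp add: ln_add_one_self_le_self)
    finally show ?thesis .
  qed
  have S: "?f sums (\<Sum>j=1..q. c j * (G j - G (Suc j)))"
  proof (rule block_to_full[OF q _ bnd])
    have "(\<lambda>M. \<Sum>k<M*q. ?f k) \<longlonglongrightarrow> (\<Sum>j=1..q. cos ((2 * real j + 1) * x) *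
          (ln (Gamma (real j / real q)) - ln (Gamma ((real j + 1) / real q))))"
      by (rule block_limit[OF q qx]) (use sx in simp)
    thus "(\<lambda>M. \<Sum>k<M*q. ?f k) \<longlonglongrightarrow> (\<Sum>j=1..q. c j * (G j - G (Suc j)))"
      by (simp add: c_def G_def add.commute)
  qed
  obtain m where m: "q = Suc m" "m \<ge> 1" using assms by (cases q) auto
  have Gq: "G (Suc m) = 0" using m qr by (simp add: G_def)
  have G1: "G (Suc (Suc m)) = G 1 - ln (real q)"
  proof -
    have "real (Suc (Suc m)) / real q = 1 / real q + 1" using m qr by (simp add: field_simps)
    hence "Gamma (real (Suc (Suc m)) / real q) = 1 / real q * Gamma (1 / real q)"
    proof -
      have "1 / real q \<notin> \<int>\<^sub>\<le>\<^sub>0" using qr nonpos_Ints_nonpos[of "1 / real q"] by auto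
      from Gamma_plus1[OF this] show ?thesis using \<open>real (Suc (Suc m)) / real q = 1 / real q + 1\<close> by simp
    qed
    moreover have gp: "Gamma (1 / real q) > 0" using qr by simp
    ultimately show ?thesis using qr gp by (simp add: G_def ln_mult ln_div less_imp_neq[symmetric])
  qed
  have c0: "c 0 = cos x" by (simp add: c_def)
  have cq: "c (Suc m) = cos x"
    using cos_shift[OF qx, of 1 0] m by (simp add: c_def)
  have cd: "c j - c (j - 1) = - 2 * sin x * sin (2 * real j * x)" if "j \<ge> 1" for j
  proof -
    have a: "(2 * real j + 1) * x = 2 * real j * x + x" by (simp add: algebra_simps)
    have b: "(2 * real (j - 1) + 1) * x = 2 * real j * x - x" using that by (simp add: of_nat_diff algebra_simps)
    show ?thesis unfolding c_def a b by (simp add: cos_add cos_diff)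
  qed
  have "(\<Sum>j=1..q. c j * (G j - G (Suc j)))
      = (\<Sum>j=1..m. (c j - c (j - 1)) * G j) + cos x * ln (real q)"
    unfolding m(1) telescope_aux Gq G1 c0 cq by (simp add: algebra_simps)
  also have "(\<Sum>j=1..m. (c j - c (j - 1)) * G j)
      = - 2 * sin x * (\<Sum>j=1..m. G j * sin (2 * real j * x))"
  proof -
    have "(\<Sum>j=1..m. (c j - c (j - 1)) * G j) = (\<Sum>j=1..m. - 2 * sin x * (G j * sin (2 * real j * x)))"
    proof (rule sum.cong[OF refl])
      fix j assume "j \<in> {1..m}"
      hence "j \<ge> 1" by simp
      from cd[OF this] show "(c j - c (j - 1)) * G j = - 2 * sin x * (G j * sin (2 * real j * x))"
        by simp
    qed
    thus ?thesis by (simp add: sum_distrib_left)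
  qed
  finally have val: "(\<Sum>j=1..q. c j * (G j - G (Suc j))) =
      ln (real q) * cos x - 2 * sin x * (\<Sum>j=1..q-1. G j * sin (2 * real j * x))"
    using m by simp
  have fe: "(\<lambda>n. ln (1 + 1 / real (n + 1)) * cos ((2 * real (n + 1) + 1) * pi * real p / real q)) = ?f"
    by (rule ext) (simp add: x_def mult.assoc)
  have se: "(\<Sum>j = 1..q - 1. ln (Gamma (real j / real q)) * sin (2 * pi * real j * real p / real q))
     = (\<Sum>j=1..q-1. G j * sin (2 * real j * x))"
    by (simp add: G_def x_def mult.assoc mult.left_commute)
  show ?thesis unfolding fe se using S val by (simp add: x_def)
qed

end
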